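(* Let $\mathcal H$ be an $As^c$-$Mag$-bialgebra. Then $\mathrm{Prim}\,\mathcal H$ is closed under the operations $\mu^n_i$ for all $n\ge3$ and $1\le i\le n-2$: if $x_1,\dots,x_n\in\mathrm{Prim}\,\mathcal H$ then $\mu^n_i(x_1,\dots,x_n)\in\mathrm{Prim}\,\mathcal H$.
   Context: An $As^c$-$Mag$-bialgebra is a vector space $\mathcal H$ over a field with a bilinear product $\cdot$ (not assumed associative) with two-sided unit $1$ and a coassociative counital coproduct $\Delta$ with $\Delta(1)=1\otimes1$ and $\Delta(x\cdot y)=\Delta(x)\cdot(1\otimes y)+(x\otimes1)\cdot\Delta(y)-x\otimes y$, the product on $\mathcal H\otimes\mathcal H$ being componentwise. $\mathrm{Prim}\,\mathcal H$ is the set of $x$ in the kernel of the counit with $\Delta(x)=x\otimes1+1\otimes x$. $\omega^1(x)=x$, $\omega^n(x_1,\dots,x_n)=\omega^{n-1}(x_1,\dots,x_{n-1})\cdot x_n$; $as(x,y,z)=(x\cdot y)\cdot z-x\cdot(y\cdot z)$; $\mu^3_1=as$; $\mu^n_1(x_1,\dots,x_n)=as(x_1,\omega^{n-2}(x_2,\dots,x_{n-1}),x_n)$ for $n\ge4$; $\mu^4_2(x_1,\dots,x_4)=as(x_1,x_2,x_3\cdot x_4)-as(x_1,x_2,x_3)\cdot x_4$; for $n\ge4$ and $2\le i\le n-2$, $\mu^n_i(x_1,\dots,x_n)=\mu^4_2(x_1,\omega^{n-i-1}(x_2,\dots,x_{n-i}),\omega^{i-1}(x_{n-i+1},\dots,x_{n-1}),x_n)$.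 *)

theory Defs
  imports Complex_Main
begin

text \<open>
  Elements of the
  tensor product H (x) H are represented by finite formal sums of elementary
  tensors, i.e. lists of pairs [(a1,b1),...,(an,bn)] standing for
  a1(x)b1 + ... + an(x)bn.  Two such sums denote the same element of H (x) H
  iff they agree under every pair of linear functionals f, g (the canonical map
  H (x) H -> Bil(H* x H*, k) is injective over a field).  Similarly for
  H (x) H (x) H.
\<close>

definition tev :: "('h \<Rightarrow> 'k::field) \<Rightarrow> ('h \<Rightarrow> 'k) \<Rightarrow> ('h \<times> 'h) list \<Rightarrow> 'k" where
  "tev f g xs = sum_list (map (\<lambda>(a, b). f a * g b) xs)"

definition teq :: "('k::field \<Rightarrow> 'h::ab_group_add \<Rightarrow> 'h) \<Rightarrow> ('h \<times> 'h) list \<Rightarrow> ('h \<times> 'h) list \<Rightarrow> bool" where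
  "teq scale xs ys \<longleftrightarrow>
     (\<forall>f g. Vector_Spaces.linear scale (*) f \<longrightarrow> Vector_Spaces.linear scale (*) g \<longrightarrow>
        tev f g xs = tev f g ys)"

definition tmul :: "('h \<Rightarrow> 'h \<Rightarrow> 'h) \<Rightarrow> ('h \<times> 'h) list \<Rightarrow> ('h \<times> 'h) list \<Rightarrow> ('h \<times> 'h) list" where
  "tmul m xs ys = concat (map (\<lambda>(a, b). map (\<lambda>(c, d). (m a c, m b d)) ys) xs)"

definition tscale :: "('k \<Rightarrow> 'h \<Rightarrow> 'h) \<Rightarrow> 'k \<Rightarrow> ('h \<times> 'h) list \<Rightarrow> ('h \<times> 'h) list" where
  "tscale scale c xs = map (\<lambda>(a, b). (scale c a, b)) xs"

definition tneg :: "('h::ab_group_add \<times> 'h) list \<Rightarrow> ('h \<times> 'h) list" where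
  "tneg xs = map (\<lambda>(a, b). (- a, b)) xs"

text \<open>(Delta (x) id) Delta x  and  (id (x) Delta) Delta x, evaluated on three linear functionals.\<close>
definition coassoc_left :: "('h \<Rightarrow> ('h \<times> 'h) list) \<Rightarrow> ('h \<Rightarrow> 'k::field) \<Rightarrow> ('h \<Rightarrow> 'k) \<Rightarrow> ('h \<Rightarrow> 'k) \<Rightarrow> 'h \<Rightarrow> 'k" where
  "coassoc_left D f g h x = sum_list (map (\<lambda>(a, b). tev f g (D a) * h b) (D x))"

definition coassoc_right :: "('h \<Rightarrow> ('h \<times> 'h) list) \<Rightarrow> ('h \<Rightarrow> 'k::field) \<Rightarrow> ('h \<Rightarrow> 'k) \<Rightarrow> ('h \<Rightarrow> 'k) \<Rightarrow> 'h \<Rightarrow> 'k" where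
  "coassoc_right D f g h x = sum_list (map (\<lambda>(a, b). f a * tev g h (D b)) (D x))"

definition asc_mag_bialgebra ::
  "('k::field \<Rightarrow> 'h::ab_group_add \<Rightarrow> 'h) \<Rightarrow> ('h \<Rightarrow> 'h \<Rightarrow> 'h) \<Rightarrow> 'h \<Rightarrow> ('h \<Rightarrow> 'k)
   \<Rightarrow> ('h \<Rightarrow> ('h \<times> 'h) list) \<Rightarrow> bool" where
  "asc_mag_bialgebra scale m one eps D \<longleftrightarrow>
     vector_space scale \<and>
     \<comment> \<open>bilinear product with two-sided unit\<close>
     (\<forall>x y z. m (x + y) z = m x z + m y z) \<and>
     (\<forall>x y z. m x (y + z) = m x y + m x z) \<and>
     (\<forall>c x y. m (scale c x) y = scale c (m x y)) \<and>
     (\<forall>c x y. m x (scale c y) = scale c (m x y)) \<and>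
     (\<forall>x. m one x = x) \<and> (\<forall>x. m x one = x) \<and>
     \<comment> \<open>linear counit\<close>
     Vector_Spaces.linear scale (*) eps \<and>
     \<comment> \<open>linear coproduct\<close>
     (\<forall>x y. teq scale (D (x + y)) (D x @ D y)) \<and>
     (\<forall>c x. teq scale (D (scale c x)) (tscale scale c (D x))) \<and>
     \<comment> \<open>coassociativity\<close>
     (\<forall>f g h x. Vector_Spaces.linear scale (*) f \<longrightarrow> Vector_Spaces.linear scale (*) g \<longrightarrow>
        Vector_Spaces.linear scale (*) h \<longrightarrow> coassoc_left D f g h x = coassoc_right D f g h x) \<and>
     \<comment> \<open>counitality\<close>
     (\<forall>x. sum_list (map (\<lambda>(a, b). scale (eps a) b) (D x)) = x) \<and>
     (\<forall>x. sum_list (map (\<lambda>(a, b). scale (eps b) a) (D x)) = x) \<and>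
     \<comment> \<open>Delta(1) = 1 (x) 1\<close>
     teq scale (D one) [(one, one)] \<and>
     \<comment> \<open>Delta(x.y) = Delta(x).(1(x)y) + (x(x)1).Delta(y) - x(x)y\<close>
     (\<forall>x y. teq scale (D (m x y))
        (tmul m (D x) [(one, y)] @ tmul m [(x, one)] (D y) @ tneg [(x, y)]))"

definition prim ::
  "('k::field \<Rightarrow> 'h::ab_group_add \<Rightarrow> 'h) \<Rightarrow> 'h \<Rightarrow> ('h \<Rightarrow> 'k) \<Rightarrow> ('h \<Rightarrow> ('h \<times> 'h) list) \<Rightarrow> 'h \<Rightarrow> bool" where
  "prim scale one eps D x \<longleftrightarrow> eps x = 0 \<and> teq scale (D x) [(x, one), (one, x)]"

definition omega :: "('h \<Rightarrow> 'h \<Rightarrow> 'h) \<Rightarrow> 'h list \<Rightarrow> 'h" where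
  "omega m xs = foldl m (hd xs) (tl xs)"

definition assoc :: "('h::ab_group_add \<Rightarrow> 'h \<Rightarrow> 'h) \<Rightarrow> 'h \<Rightarrow> 'h \<Rightarrow> 'h \<Rightarrow> 'h" where
  "assoc m x y z = m (m x y) z - m x (m y z)"

definition mu42 :: "('h::ab_group_add \<Rightarrow> 'h \<Rightarrow> 'h) \<Rightarrow> 'h \<Rightarrow> 'h \<Rightarrow> 'h \<Rightarrow> 'h \<Rightarrow> 'h" where
  "mu42 m x1 x2 x3 x4 = assoc m x1 x2 (m x3 x4) - m (assoc m x1 x2 x3) x4"

text \<open>mu^n_i(x1,...,xn) for a list xs = [x1,...,xn] (0-indexed: xs!0 = x1).
  i = 1: as(x1, omega(x2..x_{n-1}), xn)  (for n = 3 this is as(x1,x2,x3));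
  2 <= i <= n-2: mu42(x1, omega(x2..x_{n-i}), omega(x_{n-i+1}..x_{n-1}), xn).\<close>
definition mu :: "('h::ab_group_add \<Rightarrow> 'h \<Rightarrow> 'h) \<Rightarrow> nat \<Rightarrow> nat \<Rightarrow> 'h list \<Rightarrow> 'h" where
  "mu m n i xs =
     (if i = 1 then assoc m (xs ! 0) (omega m (take (n - 2) (drop 1 xs))) (xs ! (n - 1))
      else mu42 m (xs ! 0) (omega m (take (n - i - 1) (drop 1 xs)))
                 (omega m (take (i - 1) (drop (n - i) xs))) (xs ! (n - 1)))"

end

theory Submission
  imports Defs
begin

definition Rr :: "('h \<Rightarrow> ('h \<times> 'h) list) \<Rightarrow> 'h \<Rightarrow> 'h \<Rightarrow> ('h \<Rightarrow> 'k::field) \<Rightarrow> ('h \<Rightarrow> 'k) \<Rightarrow> 'k" where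
  "Rr D one u f g = tev f g (D u) - f u * g one - f one * g u"

lemma tev_Nil[simp]: "tev f g [] = 0" by (simp add: tev_def)
lemma tev_Cons[simp]: "tev f g ((a,b) # xs) = f a * g b + tev f g xs" by (simp add: tev_def)
lemma tev_append[simp]: "tev f g (xs @ ys) = tev f g xs + tev f g ys" by (simp add: tev_def)

lemma tev_tmul_r: "(\<And>a. m a one = a) \<Longrightarrow>
   tev f g (tmul m L [(one, v)]) = tev f (\<lambda>b. g (m b v)) L"
  by (induction L) (auto simp: tmul_def)

lemma tev_tmul_l: "(\<And>a. m one a = a) \<Longrightarrow>
   tev f g (tmul m [(u, one)] L) = tev (\<lambda>c. f (m u c)) g L"
  by (induction L) (auto simp: tmul_def)

lemma tev_tscale: "(\<And>a. f (scale c a) = c * f a) \<Longrightarrow>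
   tev f g (tscale scale c L) = c * tev f g L"
  by (induction L) (auto simp: tscale_def algebra_simps)

context
  fixes scale :: "'k::field \<Rightarrow> 'h::ab_group_add \<Rightarrow> 'h"
    and m :: "'h \<Rightarrow> 'h \<Rightarrow> 'h" and one :: 'h and eps :: "'h \<Rightarrow> 'k"
    and D :: "'h \<Rightarrow> ('h \<times> 'h) list"
  assumes B: "asc_mag_bialgebra scale m one eps D"
begin

abbreviation "lin f \<equiv> Vector_Spaces.linear scale (*) f"

lemma VS: "vector_space scale" using B by (simp add: asc_mag_bialgebra_def)
lemma VK: "vector_space ((*) :: 'k \<Rightarrow> 'k \<Rightarrow> 'k)"
  by (simp add: vector_space_def algebra_simps)

lemma linI: "(\<And>x y. f (x + y) = f x + f y) \<Longrightarrow> (\<And>c x. f (scale c x) = c * f x) \<Longrightarrow> lin f"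
  using VS VK by (simp add: Vector_Spaces.linear_iff)

lemma lin_parts: "lin f \<Longrightarrow> (\<forall>x y. f (x + y) = f x + f y) \<and> (\<forall>c x. f (scale c x) = c * f x)"
  by (unfold Vector_Spaces.linear_iff) (elim conjE, intro conjI, assumption+)
lemma lin_add: "lin f \<Longrightarrow> f (x + y) = f x + f y"
  using lin_parts by blast
lemma lin_scale: "lin f \<Longrightarrow> f (scale c x) = c * f x"
  using lin_parts by blast
lemma neg_scale: "- x = scale (-1) x"
proof -
  interpret vector_space scale by (rule VS)
  show ?thesis by simp
qed

lemma lin_neg: "lin f \<Longrightarrow> f (- x) = - f x"
  using lin_scale[of f "-1" x] neg_scale[of x] by simp
lemma lin_diff: "lin f \<Longrightarrow> f (x - y) = f x - f y"
  using lin_add[of f x "- y"] lin_neg[of f y] by simp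

lemma m_addL: "m (x + y) z = m x z + m y z" using B by (simp add: asc_mag_bialgebra_def)
lemma m_addR: "m x (y + z) = m x y + m x z" using B by (simp add: asc_mag_bialgebra_def)
lemma m_scL: "m (scale c x) y = scale c (m x y)" using B by (simp add: asc_mag_bialgebra_def)
lemma m_scR: "m x (scale c y) = scale c (m x y)" using B by (simp add: asc_mag_bialgebra_def)
lemma m_oneL: "m one x = x" using B by (simp add: asc_mag_bialgebra_def)
lemma m_oneR: "m x one = x" using B by (simp add: asc_mag_bialgebra_def)

lemma lin_mR[simp]: "lin f \<Longrightarrow> lin (\<lambda>c. f (m u c))"
  by (rule linI) (simp_all add: m_addR m_scR lin_add lin_scale)
lemma lin_mL[simp]: "lin g \<Longrightarrow> lin (\<lambda>b. g (m b v))"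
  by (rule linI) (simp_all add: m_addL m_scL lin_add lin_scale)

lemma lin_mLL[simp]: "lin g \<Longrightarrow> lin (\<lambda>b. g (m (m b u) v))"
  using lin_mL[of "\<lambda>b. g (m b v)" u] lin_mL[of g v] by simp
lemma lin_mLLL[simp]: "lin g \<Longrightarrow> lin (\<lambda>b. g (m (m (m b u) v) w))"
  using lin_mL[of "\<lambda>b. g (m (m b v) w)" u] lin_mLL[of g v w] by simp
lemma lin_mRR[simp]: "lin f \<Longrightarrow> lin (\<lambda>c. f (m x (m u c)))"
  using lin_mR[of "\<lambda>c. f (m x c)" u] lin_mR[of f x] by simp
lemma lin_mRRR[simp]: "lin f \<Longrightarrow> lin (\<lambda>c. f (m x (m u (m v c))))"
  using lin_mR[of "\<lambda>c. f (m x (m u c))" v] lin_mRR[of f x u] by simp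

lemma teq_tev: "teq scale xs ys \<Longrightarrow> lin f \<Longrightarrow> lin g \<Longrightarrow> tev f g xs = tev f g ys"
  by (simp add: teq_def)

lemma D_add: "lin f \<Longrightarrow> lin g \<Longrightarrow> tev f g (D (x + y)) = tev f g (D x) + tev f g (D y)"
proof -
  assume f: "lin f" and g: "lin g"
  have "teq scale (D (x + y)) (D x @ D y)" using B by (simp add: asc_mag_bialgebra_def)
  then have "tev f g (D (x + y)) = tev f g (D x @ D y)" using teq_tev f g by blast
  then show ?thesis by simp
qed

lemma D_scale: "lin f \<Longrightarrow> lin g \<Longrightarrow> tev f g (D (scale c x)) = c * tev f g (D x)"
proof -
  assume f: "lin f" and g: "lin g"
  have "teq scale (D (scale c x)) (tscale scale c (D x))" using B by (simp add: asc_mag_bialgebra_def)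
  then have "tev f g (D (scale c x)) = tev f g (tscale scale c (D x))" using teq_tev f g by blast
  also have "\<dots> = c * tev f g (D x)" by (rule tev_tscale) (simp add: lin_scale f)
  finally show ?thesis .
qed

lemma D_diff: "lin f \<Longrightarrow> lin g \<Longrightarrow> tev f g (D (x - y)) = tev f g (D x) - tev f g (D y)"
proof -
  assume f: "lin f" and g: "lin g"
  have "x - y = x + scale (-1) y" using neg_scale[of y] by simp
  then have "tev f g (D (x - y)) = tev f g (D (x + scale (-1) y))" by (simp only:)
  also have "\<dots> = tev f g (D x) + (-1) * tev f g (D y)" by (simp only: D_add[OF f g] D_scale[OF f g])
  finally show ?thesis by simp
qed

lemma R_diff: "lin f \<Longrightarrow> lin g \<Longrightarrow> Rr D one (x - y) f g = Rr D one x f g - Rr D one y f g"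
  by (simp add: Rr_def D_diff lin_diff algebra_simps)

lemma R_add: "lin f \<Longrightarrow> lin g \<Longrightarrow> Rr D one (x + y) f g = Rr D one x f g + Rr D one y f g"
  by (simp add: Rr_def D_add lin_add algebra_simps)

lemma D_mult: "lin f \<Longrightarrow> lin g \<Longrightarrow> tev f g (D (m u v)) =
   tev f (\<lambda>b. g (m b v)) (D u) + tev (\<lambda>c. f (m u c)) g (D v) - f u * g v"
proof -
  assume f: "lin f" and g: "lin g"
  have "teq scale (D (m u v)) (tmul m (D u) [(one, v)] @ tmul m [(u, one)] (D v) @ tneg [(u, v)])"
    using B by (simp add: asc_mag_bialgebra_def)
  then have "tev f g (D (m u v)) = tev f g (tmul m (D u) [(one, v)] @ tmul m [(u, one)] (D v) @ tneg [(u, v)])"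
    using teq_tev f g by blast
  also have "\<dots> = tev f (\<lambda>b. g (m b v)) (D u) + tev (\<lambda>c. f (m u c)) g (D v) + f (- u) * g v"
    by (simp only: tev_append tev_tmul_r tev_tmul_l m_oneR m_oneL) (simp add: tneg_def)
  finally show ?thesis by (simp add: lin_neg f)
qed

lemma R_mult: "lin f \<Longrightarrow> lin g \<Longrightarrow> Rr D one (m u v) f g =
   Rr D one u f (\<lambda>b. g (m b v)) + Rr D one v (\<lambda>c. f (m u c)) g + f u * g v"
  by (simp add: Rr_def D_mult m_oneL m_oneR algebra_simps)

lemma R_prim: "prim scale one eps D x \<Longrightarrow> lin f \<Longrightarrow> lin g \<Longrightarrow> Rr D one x f g = 0"
  by (auto simp: prim_def Rr_def dest: teq_tev)

lemma R_assoc_gen: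
  assumes px: "prim scale one eps D x" and f: "lin f" and g: "lin g"
  shows "Rr D one (assoc m x u w) f g =
     Rr D one w (\<lambda>c. f (m (m x u) c)) g - Rr D one w (\<lambda>c. f (m x (m u c))) g"
proof -
  have r1: "Rr D one (m (m x u) w) f g = Rr D one u (\<lambda>c. f (m x c)) (\<lambda>b. g (m b w)) + f x * g (m u w)
     + Rr D one w (\<lambda>c. f (m (m x u) c)) g + f (m x u) * g w"
    using R_mult[OF f g, of "m x u" w] R_mult[OF f lin_mL[OF g], of x u] R_prim[OF px f lin_mLL[OF g]]
    by simp
  have r2: "Rr D one (m x (m u w)) f g = Rr D one u (\<lambda>c. f (m x c)) (\<lambda>b. g (m b w))
     + Rr D one w (\<lambda>c. f (m x (m u c))) g + f (m x u) * g w + f x * g (m u w)"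
    using R_mult[OF f g, of x "m u w"] R_mult[OF lin_mR[OF f] g, of u w] R_prim[OF px f lin_mL[OF g]]
    by simp
  show ?thesis unfolding assoc_def R_diff[OF f g] r1 r2 by simp
qed

lemma R_assoc: assumes px: "prim scale one eps D x" and pz: "prim scale one eps D z"
  and f: "lin f" and g: "lin g"
  shows "Rr D one (assoc m x u z) f g = 0"
  unfolding R_assoc_gen[OF px f g] R_prim[OF pz lin_mR[OF f] g] R_prim[OF pz lin_mRR[OF f] g] by simp

lemma R_mu42: assumes px: "prim scale one eps D x" and pz: "prim scale one eps D z"
  and f: "lin f" and g: "lin g"
  shows "Rr D one (mu42 m x u v z) f g = 0"
proof -
  define F1 where "F1 = (\<lambda>c. f (m (m x u) c))"
  define F2 where "F2 = (\<lambda>c. f (m x (m u c)))"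
  have l1: "lin F1" unfolding F1_def using f by simp
  have l2: "lin F2" unfolding F2_def using f by simp
  have e1: "Rr D one (m v z) F1 g = Rr D one v F1 (\<lambda>b. g (m b z)) + F1 v * g z"
    using R_mult[OF l1 g, of v z] R_prim[OF pz lin_mR[OF l1] g] by simp
  have e2: "Rr D one (m v z) F2 g = Rr D one v F2 (\<lambda>b. g (m b z)) + F2 v * g z"
    using R_mult[OF l2 g, of v z] R_prim[OF pz lin_mR[OF l2] g] by simp
  have e3: "Rr D one (m (assoc m x u v) z) f g = Rr D one (assoc m x u v) f (\<lambda>b. g (m b z)) + f (assoc m x u v) * g z"
    using R_mult[OF f g, of "assoc m x u v" z] R_prim[OF pz lin_mR[OF f] g] by simp
  have e4: "Rr D one (assoc m x u v) f (\<lambda>b. g (m b z)) = Rr D one v F1 (\<lambda>b. g (m b z)) - Rr D one v F2 (\<lambda>b. g (m b z))"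
    unfolding F1_def F2_def by (rule R_assoc_gen[OF px f lin_mL[OF g]])
  have e5: "f (assoc m x u v) = F1 v - F2 v"
    unfolding F1_def F2_def assoc_def by (rule lin_diff[OF f])
  have e6: "Rr D one (assoc m x u (m v z)) f g = Rr D one (m v z) F1 g - Rr D one (m v z) F2 g"
    unfolding F1_def F2_def by (rule R_assoc_gen[OF px f g])
  show ?thesis unfolding mu42_def R_diff[OF f g] e6 e1 e2 e3 e4 e5 by (simp add: algebra_simps)
qed

lemma lin_eps: "lin eps" using B by (simp add: asc_mag_bialgebra_def)

lemma lin_zero: "lin f \<Longrightarrow> f 0 = 0"
  using lin_diff[of f 0 0] by simp

lemma lin_sum: "lin f \<Longrightarrow> f (sum_list (map (\<lambda>(a, b). scale (c a) b) L)) = sum_list (map (\<lambda>(a, b). c a * f b) L)"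
  by (induction L) (auto simp: lin_zero lin_add lin_scale)

lemma eps_tev: "eps v = tev eps eps (D v)"
proof -
  have "sum_list (map (\<lambda>(a, b). scale (eps a) b) (D v)) = v" using B by (simp add: asc_mag_bialgebra_def)
  then have "eps v = eps (sum_list (map (\<lambda>(a, b). scale (eps a) b) (D v)))" by simp
  also have "\<dots> = sum_list (map (\<lambda>(a, b). eps a * eps b) (D v))" by (rule lin_sum[OF lin_eps])
  finally show ?thesis by (simp add: tev_def)
qed

lemma prim_of_R: assumes R: "\<And>f g. lin f \<Longrightarrow> lin g \<Longrightarrow> Rr D one w f g = 0"
  shows "prim scale one eps D w"
proof -
  have T: "teq scale (D w) [(w, one), (one, w)]"
    unfolding teq_def using R by (simp add: Rr_def algebra_simps)
  have "teq scale (D one) [(one, one)]" using B by (simp add: asc_mag_bialgebra_def)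
  then have o: "eps one = eps one * eps one" using eps_tev[of one] teq_tev[OF _ lin_eps lin_eps] by simp
  have e: "eps w = eps w * eps one + eps one * eps w"
    using eps_tev[of w] teq_tev[OF T lin_eps lin_eps] by simp
  have "eps w = 0"
  proof (cases "eps one = 0")
    case True then show ?thesis using e by simp
  next
    case False then have "eps one = 1" using o by (metis mult_cancel_left2)
    then have "eps w + 0 = eps w + eps w" using e by (simp only: mult_1_left mult_1_right add_0_right)
    then show ?thesis using add_left_imp_eq by metis
  qed
  then show ?thesis using T by (simp add: prim_def)
qed

end


theorem proposition2p8:
  fixes scale :: "'k::field \<Rightarrow> 'h::ab_group_add \<Rightarrow> 'h"
    and m :: "'h \<Rightarrow> 'h \<Rightarrow> 'h" and one :: 'h and eps :: "'h \<Rightarrow> 'k"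
    and D :: "'h \<Rightarrow> ('h \<times> 'h) list"
    and n i :: nat and xs :: "'h list"
  assumes "asc_mag_bialgebra scale m one eps D"
    and "3 \<le> n" and "1 \<le> i" and "i \<le> n - 2"
    and "length xs = n"
    and "\<forall>x\<in>set xs. prim scale one eps D x"
  shows "prim scale one eps D (mu m n i xs)"
proof -
  note Bm = assms(1)
  have p0: "prim scale one eps D (xs ! 0)" using assms(2,5,6) by auto
  have pn: "prim scale one eps D (xs ! (n - 1))" using assms(2,5,6) by auto
  show ?thesis
  proof (rule prim_of_R[OF Bm])
    fix f g assume f: "Vector_Spaces.linear scale (*) f" and g: "Vector_Spaces.linear scale (*) g"
    show "Rr D one (mu m n i xs) f g = 0"
      unfolding mu_def using R_assoc[OF Bm p0 pn f g] R_mu42[OF Bm p0 pn f g] by simp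
  qed
qed

end
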